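(* Let $n\in\mathbb{N}$ and let $X$ be the set of all compact subsets of $(0,1)^n$ with nonempty interior, viewed as a Borel subset of $\mathcal{K}((0,1)^n)$. There exist Borel measurable maps $f_k:X\to(0,1)^n$, $k\in\mathbb{N}$, such that for every $K\in X$: (i) $f_k(K)\in(0,1)^n\setminus K$ for all $k$; (ii) the sequence $(f_k(K))_{k=1}^\infty$ is injective; (iii) $\overline{\{f_k(K):k\in\mathbb{N}\}}=\{f_k(K):k\in\mathbb{N}\}\cup\partial K$; (iv) for every $l\in\mathbb{N}$ the point $f_l(K)$ is isolated in $\overline{\{f_k(K):k\in\mathbb{N}\}}$.
   Context: $\mathcal{K}(Z)$ is the space of compact subsets of $Z$ with the Vietoris topology. Closures, interiors and boundaries are taken in $\mathbb{R}^n$. *)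

theory Defs
  imports "HOL-Analysis.Analysis"
begin

definition vietoris :: "'a::topological_space set \<Rightarrow> 'a set topology" where
  "vietoris Z = subtopology
     (topology_generated_by
        ({{K. K \<subseteq> U} | U. openin (top_of_set Z) U} \<union>
         {{K. K \<inter> U \<noteq> {}} | U. openin (top_of_set Z) U}))
     {K. compact K \<and> K \<subseteq> Z}"

definition borel_of :: "'a topology \<Rightarrow> 'a measure" where
  "borel_of T = sigma (topspace T) {U. openin T U}"

end

theory Submission
  imports Defs
begin


definition grid :: "nat \<Rightarrow> (real^'n) set" where
  "grid m = {x. \<forall>i. \<exists>j::nat. j < 2^m \<and> x$i = (2*real j+1)/2^(Suc m)}"

lemma One_nth_cart[simp]: "(One :: real^'n) $ i = 1"
  by (metis one_index Cart_1)

lemma grid_finite: "finite (grid m :: (real^'n) set)"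
proof -
  let ?A = "(\<lambda>j::nat. (2*real j+1)/2^(Suc m)) ` {..<2^m}"
  have "grid m \<subseteq> (\<lambda>f. vec_lambda f) ` (PiE UNIV (\<lambda>i::'n. ?A))"
  proof
    fix x :: "real^'n" assume "x \<in> grid m"
    then have "(\<lambda>i. x$i) \<in> PiE UNIV (\<lambda>i. ?A)" by (force simp: grid_def PiE_def)
    then show "x \<in> (\<lambda>f. vec_lambda f) ` (PiE UNIV (\<lambda>i::'n. ?A))"
      by (rule rev_image_eqI) simp
  qed
  then show ?thesis by (rule finite_subset) (intro finite_imageI finite_PiE; simp)
qed

lemma grid_box: "grid m \<subseteq> box 0 (One :: real^'n)"
proof
  fix x :: "real^'n" assume "x \<in> grid m"
  show "x \<in> box 0 One" unfolding mem_box_cart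
  proof
    fix i
    from \<open>x \<in> grid m\<close> obtain j :: nat where j: "j < 2^m" "x$i = (2*real j+1)/2^(Suc m)"
      by (auto simp: grid_def)
    have "2*real j + 1 < 2^Suc m"
    proof -
      have "2*j+1 < 2^Suc m" using j(1) by simp
      then have "real (2*j+1) < real (2^Suc m)" by (simp only: of_nat_less_iff)
      then show ?thesis by simp
    qed
    moreover have "(0::real) < 2*real j + 1" by simp
    ultimately have "0 < x $ i \<and> x $ i < 1" unfolding j(2)
      by (simp add: divide_less_eq_1 zero_less_divide_iff)
    then show "0 $ i < x $ i \<and> x $ i < One $ i" by (simp only: One_nth_cart zero_index)
  qed
qed

lemma grid_approx:
  fixes q :: "real^'n"
  assumes "q \<in> box 0 One"
  shows "\<exists>g\<in>grid m. dist g q \<le> real CARD('n) * (1/2)^m / 2"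
proof -
  define j where "j i = nat \<lfloor>q$i * 2^m\<rfloor>" for i
  define g where "g = (\<chi> i. (2*real (j i)+1)/2^(Suc m) :: real^'n)"
  have q01: "0 < q$i" "q$i < 1" for i using assms unfolding mem_box_cart One_nth_cart zero_index by auto
  have fl: "real (j i) \<le> q$i * 2^m" "q$i*2^m < real (j i) + 1" for i
  proof -
    have "0 \<le> q$i * 2^m" using q01[of i] by simp
    then have "real (j i) = \<lfloor>q$i * 2^m\<rfloor>" unfolding j_def by simp
    then show "real (j i) \<le> q$i * 2^m" "q$i*2^m < real (j i) + 1"
      by linarith+
  qed
  have jl: "j i < 2^m" for i
  proof -
    have "q$i * 2^m < 1 * 2^m" using q01[of i] by (intro mult_strict_right_mono) auto
    then have "real (j i) < 2^m" using fl(1)[of i] by linarith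
    moreover have "(2::real)^m = real (2^m)" by simp
    ultimately have "real (j i) < real (2^m)" by metis
    then show ?thesis by (metis of_nat_less_iff)
  qed
  have gg: "g \<in> grid m" unfolding grid_def g_def using jl by auto
  have err: "\<bar>(g - q)$i\<bar> \<le> 1/2^(Suc m)" for i
  proof -
    have e: "(g - q)$i = (2*real (j i) + 1 - 2*(q$i*2^m))/2^(Suc m)"
      by (simp add: g_def field_simps)
    have "\<bar>2*real (j i) + 1 - 2*(q$i*2^m)\<bar> \<le> 1" using fl[of i] by linarith
    then show ?thesis unfolding e by (simp add: divide_right_mono)
  qed
  have "dist g q = norm (g - q)" by (simp add: dist_norm)
  also have "\<dots> \<le> (\<Sum>i\<in>UNIV. \<bar>(g - q)$i\<bar>)" by (rule norm_le_l1_cart)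
  also have "\<dots> \<le> (\<Sum>i\<in>(UNIV::'n set). 1/2^(Suc m))" by (rule sum_mono) (rule err)
  also have "\<dots> = real CARD('n) * (1/2)^m / 2" by (simp add: power_divide)
  finally show ?thesis using gg by blast
qed


definition cand :: "(real^'n) set \<Rightarrow> (real^'n) set" where
  "cand K = {g. \<exists>m. g \<in> grid m \<and> real CARD('n) * (1/2)^m < infdist g K
                   \<and> infdist g K \<le> 5 * (real CARD('n) * (1/2)^m)}"

lemma card_ge1: "1 \<le> real CARD('n::finite)"
proof -
  have "0 < CARD('n)" by simp
  then show ?thesis by linarith
qed

lemma cand_out:
  fixes K :: "(real^'n) set"
  assumes "closed K" "K \<noteq> {}" "g \<in> cand K"
  shows "g \<in> box 0 One" "g \<notin> K" "0 < infdist g K"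
proof -
  from assms(3) obtain m where m: "g \<in> grid m" "real CARD('n) * (1/2)^m < infdist g K"
    by (auto simp: cand_def)
  have "0 < real CARD('n) * (1/2::real)^m" using card_ge1[where 'n='n] by simp
  then show "0 < infdist g K" using m by linarith
  then show "g \<notin> K" by auto
  show "g \<in> box 0 One" using m grid_box by blast
qed

lemma cand_far_finite:
  fixes K :: "(real^'n) set"
  assumes "0 < t"
  shows "finite {g\<in>cand K. t \<le> infdist g K}"
proof -
  let ?c = "real CARD('n)"
  have c: "0 < ?c" using card_ge1[where 'n='n] by simp
  obtain M where M: "(1/2::real)^M < t/(5*?c)"
    using real_arch_pow_inv[of "t/(5*?c)" "1/2"] assms c by auto
  have "{g\<in>cand K. t \<le> infdist g K} \<subseteq> (\<Union>m\<in>{..<M}. grid m)"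
  proof
    fix g assume g: "g \<in> {g\<in>cand K. t \<le> infdist g K}"
    then obtain m where m: "g \<in> grid m" "infdist g K \<le> 5 * (?c * (1/2)^m)"
      by (auto simp: cand_def)
    have "m < M"
    proof (rule ccontr)
      assume "\<not> m < M"
      then have "(1/2::real)^m \<le> (1/2)^M" by (intro power_decreasing) auto
      then have "(1/2::real)^m < t/(5*?c)" using M by linarith
      then have "?c * (1/2)^m < ?c * (t/(5*?c))" using c by (rule mult_strict_left_mono)
      then have "5 * (?c * (1/2)^m) < 5 * (?c * (t/(5*?c)))" by linarith
      also have "\<dots> = t" using c by simp
      finally show False using m(2) g by auto
    qed
    then show "g \<in> (\<Union>m\<in>{..<M}. grid m)" using m by auto
  qed
  then show ?thesis by (rule finite_subset) (auto intro: grid_finite)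
qed

lemma cand_nolimpt:
  fixes K :: "(real^'n) set"
  assumes "0 < infdist x K"
  shows "\<not> x islimpt cand K"
proof
  assume lim: "x islimpt cand K"
  let ?t = "infdist x K"
  let ?F = "{g\<in>cand K. ?t/2 \<le> infdist g K}"
  have "x islimpt ?F"
    unfolding islimpt_approachable
  proof (intro allI impI)
    fix e :: real assume "0 < e"
    then obtain y where y: "y \<in> cand K" "y \<noteq> x" "dist y x < min e (?t/2)"
      using lim assms unfolding islimpt_approachable
      by (metis half_gt_zero min_less_iff_conj)
    have "?t \<le> infdist y K + dist x y" by (rule infdist_triangle)
    then have "?t/2 \<le> infdist y K" using y(3) by (simp add: dist_commute)
    then show "\<exists>y'\<in>?F. y' \<noteq> x \<and> dist y' x < e" using y by auto
  qed
  moreover have "finite ?F" using cand_far_finite[of "?t/2" K] assms by simp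
  ultimately show False using islimpt_finite by blast
qed

lemma cand_closure_sub:
  fixes K :: "(real^'n) set"
  assumes "closed K" "K \<noteq> {}"
  shows "closure (cand K) \<subseteq> cand K \<union> frontier K"
proof
  fix x assume x: "x \<in> closure (cand K)"
  show "x \<in> cand K \<union> frontier K"
  proof (cases "x \<in> cand K")
    case True then show ?thesis by simp
  next
    case False
    then have "x islimpt cand K" using x by (auto simp: closure_def)
    then have "\<not> 0 < infdist x K" using cand_nolimpt by blast
    then have "infdist x K = 0" using infdist_nonneg[of x K] by linarith
    then have xK: "x \<in> K" using in_closed_iff_infdist_zero[OF assms] by simp
    have "x \<notin> interior K"
    proof
      assume "x \<in> interior K"
      then obtain e where e: "0 < e" "ball x e \<subseteq> K"
        unfolding mem_interior by blast
      from x[unfolded closure_approachable] e(1) obtain y where "y \<in> cand K" "dist y x < e"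
        by blast
      then have "y \<in> K" using e(2) by (auto simp: dist_commute)
      then show False using cand_out[OF assms \<open>y \<in> cand K\<close>] by simp
    qed
    then show ?thesis using xK assms(1) by (simp add: frontier_def closure_closed)
  qed
qed

lemma cand_frontier:
  fixes K :: "(real^'n) set"
  assumes "closed K" "K \<noteq> {}" "K \<subseteq> box 0 One"
  shows "frontier K \<subseteq> closure (cand K)"
proof
  fix p assume p: "p \<in> frontier K"
  let ?c = "real CARD('n)"
  have c: "1 \<le> ?c" using card_ge1[where 'n='n] .
  have pK: "p \<in> K" and pint: "p \<notin> interior K"
    using p assms(1) by (auto simp: frontier_def closure_closed)
  have pbox: "p \<in> box 0 One" using pK assms(3) by auto
  obtain r where r: "0 < r" "ball p r \<subseteq> box 0 One"
    using open_box[of 0 One] pbox unfolding open_contains_ball by blast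
  show "p \<in> closure (cand K)"
    unfolding closure_approachable
  proof (intro allI impI)
    fix e :: real assume e: "0 < e"
    define \<epsilon> where "\<epsilon> = min (min (e/3) r) 1"
    have \<epsilon>: "0 < \<epsilon>" "\<epsilon> \<le> e/3" "\<epsilon> \<le> r" "\<epsilon> \<le> 1" using e r by (auto simp: \<epsilon>_def)
    have "\<not> ball p \<epsilon> \<subseteq> K" using pint \<epsilon>(1) unfolding mem_interior by blast
    then obtain q where q: "q \<in> ball p \<epsilon>" "q \<notin> K" by blast
    have qbox: "q \<in> box 0 One" using q(1) \<epsilon>(3) r(2) by auto
    define t where "t = infdist q K"
    have t0: "0 < t" unfolding t_def using infdist_pos_not_in_closed assms q by blast
    have "t \<le> dist q p" unfolding t_def using pK by (rule infdist_le)
    then have tl: "t < \<epsilon>" using q(1) by (simp add: dist_commute)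
    define \<delta> where "\<delta> m = ?c * (1/2::real)^m" for m
    have \<delta>pos: "0 < \<delta> m" for m using c by (simp add: \<delta>_def)
    have \<delta>Suc: "\<delta> m = 2 * \<delta> (Suc m)" for m by (simp add: \<delta>_def)
    obtain M where M: "(1/2::real)^M < t/(2*?c)"
      using real_arch_pow_inv[of "t/(2*?c)" "1/2"] t0 c by auto
    have "\<delta> M < t/2" using M c by (simp add: \<delta>_def field_simps)
    define m where "m = (LEAST m. \<delta> m < t/2)"
    have m1: "\<delta> m < t/2" unfolding m_def using \<open>\<delta> M < t/2\<close> by (rule LeastI)
    have "m \<noteq> 0"
    proof
      assume "m = 0"
      then have "\<delta> 0 < t/2" using m1 by simp
      then show False using c tl \<epsilon>(4) by (simp add: \<delta>_def)
    qed
    then obtain m' where m': "m = Suc m'" by (cases m) auto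
    have "m' < m" using m' by simp
    then have "\<not> \<delta> m' < t/2" unfolding m_def by (rule not_less_Least)
    then have m2: "t/2 \<le> 2 * \<delta> m" using \<delta>Suc[of m'] m' by simp
    obtain g where g: "g \<in> grid m" "dist g q \<le> \<delta> m / 2"
      using grid_approx[OF qbox, of m] unfolding \<delta>_def by blast
    have "t \<le> infdist g K + dist q g" unfolding t_def by (rule infdist_triangle)
    then have lo: "\<delta> m < infdist g K" using g(2) m1 m2 \<delta>pos[of m] by (simp add: dist_commute)
    have "infdist g K \<le> t + dist g q" unfolding t_def by (rule infdist_triangle)
    then have hi: "infdist g K \<le> 5 * \<delta> m" using g(2) m2 \<delta>pos[of m] by linarith
    have gc: "g \<in> cand K" unfolding cand_def using g(1) lo hi by (auto simp: \<delta>_def)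
    have "dist g p \<le> dist g q + dist q p" by (rule dist_triangle)
    also have "\<dots> < e"
    proof -
      have "dist q p < \<epsilon>" using q(1) by (simp add: dist_commute)
      then show ?thesis using g(2) m1 tl \<epsilon>(2) t0 by linarith
    qed
    finally show "\<exists>y\<in>cand K. dist y p < e" using gc by blast
  qed
qed

lemma cand_closure:
  fixes K :: "(real^'n) set"
  assumes "closed K" "K \<noteq> {}" "K \<subseteq> box 0 One"
  shows "closure (cand K) = cand K \<union> frontier K"
  using cand_closure_sub[OF assms(1,2)] cand_frontier[OF assms] closure_subset by blast

lemma cand_isolated:
  fixes K :: "(real^'n) set"
  assumes "closed K" "K \<noteq> {}" "K \<subseteq> box 0 One" "g \<in> cand K"
  shows "g isolated_in closure (cand K)"
  unfolding isolated_in_islimpt_iff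
proof
  have gd: "0 < infdist g K" "g \<notin> K" using cand_out[OF assms(1,2,4)] by auto
  have "\<not> g islimpt frontier K"
  proof
    assume "g islimpt frontier K"
    then have "g \<in> frontier K" using frontier_closed closed_limpt by blast
    then show False using gd assms(1) by (simp add: frontier_def closure_closed)
  qed
  then show "\<not> g islimpt closure (cand K)"
    using cand_nolimpt[OF gd(1)] by (simp add: cand_closure[OF assms(1-3)] islimpt_Un)
  show "g \<in> closure (cand K)" using assms(4) closure_subset by blast
qed

lemma cand_infinite:
  fixes K :: "(real^'n) set"
  assumes "compact K" "K \<noteq> {}" "K \<subseteq> box 0 One"
  shows "infinite (cand K)"
proof
  assume fin: "finite (cand K)"
  have cl: "closed K" using assms(1) compact_imp_closed by blast
  have "K \<noteq> UNIV" using assms(1) not_bounded_UNIV compact_imp_bounded by blast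
  then have "frontier K \<noteq> {}" using assms(2) frontier_eq_empty by blast
  then obtain p where p: "p \<in> frontier K" by blast
  have "closure (cand K) = cand K" using fin finite_imp_closed closure_closed by blast
  then have "p \<in> cand K" using cand_frontier[OF cl assms(2,3)] p by blast
  moreover have "p \<in> K" using p cl by (simp add: frontier_def closure_closed)
  ultimately show False using cand_out[OF cl assms(2)] by blast
qed



lemma infdist_cball_disj:
  fixes K :: "'a::heine_borel set"
  assumes "closed K" "K \<noteq> {}"
  shows "K \<inter> cball g r = {} \<longleftrightarrow> r < infdist g K"
proof
  assume d: "K \<inter> cball g r = {}"
  obtain y where y: "y \<in> K" "infdist g K = dist g y" using infdist_attains_inf[OF assms] by blast
  then have "y \<notin> cball g r" using d by blast
  then show "r < infdist g K" using y by (simp add: mem_cball)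
next
  assume r: "r < infdist g K"
  show "K \<inter> cball g r = {}"
  proof (rule ccontr)
    assume "K \<inter> cball g r \<noteq> {}"
    then obtain y where "y \<in> K" "dist g y \<le> r" by (auto simp: mem_cball)
    moreover have "infdist g K \<le> dist g y" using \<open>y \<in> K\<close> by (rule infdist_le)
    ultimately show False using r by linarith
  qed
qed

lemma vietoris_open_sub:
  assumes "openin (top_of_set Z) V" "X \<subseteq> {K. compact K \<and> K \<subseteq> Z}"
  shows "openin (subtopology (vietoris Z) X) {K\<in>X. K \<subseteq> V}"
proof -
  let ?B = "{{K. K \<subseteq> U} | U. openin (top_of_set Z) U} \<union>
         {{K. K \<inter> U \<noteq> {}} | U. openin (top_of_set Z) U}"
  have "openin (topology_generated_by ?B) {K. K \<subseteq> V}"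
    unfolding openin_topology_generated_by_iff
    by (rule generate_topology_on.Basis) (use assms(1) in blast)
  then have "openin (vietoris Z) ({K. K \<subseteq> V} \<inter> {K. compact K \<and> K \<subseteq> Z})"
    unfolding vietoris_def by (rule openin_subtopology_Int)
  note openin_subtopology_Int[OF this, of X]
  moreover have "{K\<in>X. K \<subseteq> V} = ({K. K \<subseteq> V} \<inter> {K. compact K \<and> K \<subseteq> Z}) \<inter> X"
    using assms(2) by auto
  ultimately show ?thesis by simp
qed

lemma vietoris_top:
  assumes "X \<subseteq> {K. compact K \<and> K \<subseteq> Z}"
  shows "topspace (subtopology (vietoris Z) X) = X"
proof -
  let ?B = "{{K. K \<subseteq> U} | U. openin (top_of_set Z) U} \<union>
         {{K. K \<inter> U \<noteq> {}} | U. openin (top_of_set Z) U}"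
  have "openin (top_of_set Z) Z" by simp
  then have "{K. K \<subseteq> Z} \<in> ?B" by blast
  then have B: "{K. K \<subseteq> Z} \<subseteq> \<Union>?B" by (rule Union_upper)
  have "X \<subseteq> {K. K \<subseteq> Z}" using assms by auto
  with B have XB: "X \<subseteq> \<Union>?B" by (rule subset_trans[rotated])
  show ?thesis unfolding vietoris_def topspace_subtopology topology_generated_by_topspace
    by (intro Int_absorb1 le_infI XB assms)
qed

lemma borel_of_open: "openin T U \<Longrightarrow> U \<in> sets (borel_of T)"
  unfolding borel_of_def by (subst sets_measure_of) (auto dest: openin_subset)

lemma space_borel_of: "space (borel_of T) = topspace T"
  unfolding borel_of_def by (rule space_measure_of_conv)

fun idx :: "(nat \<Rightarrow> 'a \<Rightarrow> bool) \<Rightarrow> nat \<Rightarrow> 'a \<Rightarrow> nat" where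
  "idx Q 0 x = (LEAST i. Q i x)"
| "idx Q (Suc k) x = (LEAST i. Q i x \<and> idx Q k x < i)"

lemma idx_meas:
  assumes [measurable]: "\<And>i. (\<lambda>x. Q i x) \<in> measurable M (count_space UNIV)"
  shows "(\<lambda>x. idx Q k x) \<in> measurable M (count_space UNIV)"
proof (induction k)
  case 0
  then show ?case by simp
next
  case (Suc k)
  have [measurable]: "(\<lambda>x. idx Q k x < i) \<in> measurable M (count_space UNIV)" for i
    using measurable_compose[OF Suc.IH, of "\<lambda>n. n < i" "count_space UNIV"] by simp
  show ?case by simp
qed

lemma idx_props:
  assumes inf: "infinite {i. Q i x}"
  shows "Q (idx Q k x) x" "strict_mono (\<lambda>k. idx Q k x)"
    "Q j x \<Longrightarrow> \<exists>k. idx Q k x = j"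
proof -
  have ex: "\<exists>i. Q i x \<and> n < i" for n using inf unfolding infinite_nat_iff_unbounded by auto
  have s: "Q (idx Q (Suc k) x) x \<and> idx Q k x < idx Q (Suc k) x" for k
    using LeastI_ex[OF ex[of "idx Q k x"]] by simp
  have z: "Q (idx Q 0 x) x" using LeastI_ex[of "\<lambda>i. Q i x"] ex[of 0] by auto
  show "Q (idx Q k x) x" using s z by (cases k) auto
  show sm: "strict_mono (\<lambda>k. idx Q k x)" unfolding strict_mono_Suc_iff using s by blast
  assume j: "Q j x"
  have ge: "k \<le> idx Q k x" for k using strict_mono_imp_increasing[OF sm] by simp
  define k where "k = (LEAST k. j \<le> idx Q k x)"
  have k1: "j \<le> idx Q k x" unfolding k_def using ge[of j] by (rule LeastI)
  show "\<exists>k. idx Q k x = j"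
  proof (cases k)
    case 0
    have "idx Q 0 x \<le> j" using j by (simp add: Least_le)
    then have "idx Q 0 x = j" using k1 0 by simp
    then show ?thesis by blast
  next
    case (Suc k')
    have "k' < k" using Suc by simp
    then have "\<not> j \<le> idx Q k' x" unfolding k_def by (rule not_less_Least)
    then have "idx Q (Suc k') x \<le> j" using j by (simp add: Least_le)
    then have "idx Q (Suc k') x = j" using k1 Suc by simp
    then show ?thesis by blast
  qed
qed


theorem lemma3p18:
  defines "X \<equiv> {K :: (real^'n) set. compact K \<and> K \<subseteq> box 0 One \<and> interior K \<noteq> {}}"
  shows "\<exists>f :: nat \<Rightarrow> (real^'n) set \<Rightarrow> real^'n.
           (\<forall>k. f k \<in> measurable (borel_of (subtopology (vietoris (box 0 One)) X)) borel) \<and>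
           (\<forall>K\<in>X.
              (\<forall>k. f k K \<in> box 0 One - K) \<and>
              inj (\<lambda>k. f k K) \<and>
              closure (range (\<lambda>k. f k K)) = range (\<lambda>k. f k K) \<union> frontier K \<and>
              (\<forall>l. f l K isolated_in closure (range (\<lambda>k. f k K))))"
proof -
  let ?Z = "box 0 (One::real^'n)"
  let ?T = "subtopology (vietoris ?Z) X"
  let ?M = "borel_of ?T"
  let ?c = "real CARD('n)"
  have XC: "X \<subseteq> {K. compact K \<and> K \<subseteq> ?Z}" unfolding X_def by auto
  have Xprops: "compact K" "closed K" "K \<noteq> {}" "K \<subseteq> ?Z" if "K \<in> X" for K
    using that unfolding X_def by (auto simp: compact_imp_closed)
  have spM: "space ?M = X" by (simp only: space_borel_of vietoris_top[OF XC])
  have Aset: "{K\<in>X. K \<inter> cball g r = {}} \<in> sets ?M" for g r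
  proof -
    have eq: "{K\<in>X. K \<inter> cball g r = {}} = {K\<in>X. K \<subseteq> ?Z \<inter> (- cball g r)}"
    proof (intro Collect_cong conj_cong refl)
      fix K assume "K \<in> X"
      then have "K \<subseteq> ?Z" by (rule Xprops(4))
      then show "(K \<inter> cball g r = {}) = (K \<subseteq> ?Z \<inter> - cball g r)" by auto
    qed
    have "openin (top_of_set ?Z) (?Z \<inter> (- cball g r))"
      by (rule openin_open_Int) (simp add: open_Compl)
    then have "{K\<in>X. K \<subseteq> ?Z \<inter> (- cball g r)} \<in> sets ?M"
      by (rule borel_of_open[OF vietoris_open_sub[OF _ XC]])
    then show ?thesis unfolding eq .
  qed
  have Bset: "{K\<in>X. K \<inter> cball g r \<noteq> {}} \<in> sets ?M" for g r
  proof -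
    have "{K\<in>X. K \<inter> cball g r \<noteq> {}} = space ?M - {K\<in>X. K \<inter> cball g r = {}}"
      using spM by auto
    then show ?thesis using Aset by simp
  qed
  define D where "D = (\<Union>m. grid m :: (real^'n) set)"
  have "((\<chi> i. 1/2) :: real^'n) \<in> grid 0" unfolding grid_def
    by (intro CollectI allI exI[of _ 0]) simp
  then have Dne: "D \<noteq> {}" unfolding D_def by blast
  have Dc: "countable D" unfolding D_def by (intro countable_UN) (auto intro: countable_finite grid_finite)
  define e where "e = from_nat_into D"
  have re: "range e = D" using Dne Dc by (simp add: e_def)
  have candD: "cand K \<subseteq> D" for K unfolding cand_def D_def by auto
  define Q where "Q i K \<longleftrightarrow> e i \<in> cand K \<and> (\<forall>j<i. e j \<noteq> e i)" for i K
  have Qm: "(\<lambda>K. Q i K) \<in> measurable ?M (count_space UNIV)" for i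
  proof -
    define A where "A m = (if e i \<in> grid m
      then {K\<in>X. K \<inter> cball (e i) (?c * (1/2)^m) = {}} \<inter> {K\<in>X. K \<inter> cball (e i) (5 * (?c * (1/2)^m)) \<noteq> {}}
      else {})" for m
    have Am: "A m \<in> sets ?M" for m unfolding A_def using Aset Bset by auto
    have "{K \<in> space ?M. Q i K} = (if (\<forall>j<i. e j \<noteq> e i) then (\<Union>m. A m) else {})"
    proof -
      have iff: "K \<in> X \<Longrightarrow> e i \<in> cand K \<longleftrightarrow> (\<exists>m. K \<in> A m)" for K
        using infdist_cball_disj[OF Xprops(2,3)] unfolding cand_def A_def
        by (auto simp: not_less)
      have AX: "A m \<subseteq> X" for m unfolding A_def by auto
      show ?thesis
      proof (cases "\<forall>j<i. e j \<noteq> e i")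
        case True
        show ?thesis
        unfolding if_P[OF True]
        proof (intro equalityI subsetI)
          fix K assume "K \<in> {K \<in> space ?M. Q i K}"
          then have "K \<in> X" "e i \<in> cand K" unfolding spM Q_def by auto
          then show "K \<in> (\<Union>m. A m)" using iff by blast
        next
          fix K assume "K \<in> (\<Union>m. A m)"
          then obtain m where m: "K \<in> A m" by blast
          then have "K \<in> X" using AX by blast
          then have "e i \<in> cand K" using iff m by blast
          then show "K \<in> {K \<in> space ?M. Q i K}" using True \<open>K \<in> X\<close> unfolding spM Q_def by simp
        qed
      next
        case False
        then show ?thesis unfolding Q_def by auto
      qed
    qed
    moreover have "(\<Union>m. A m) \<in> sets ?M" using Am by auto
    ultimately have "{K \<in> space ?M. Q i K} \<in> sets ?M" by simp
    then show ?thesis by (simp add: pred_def)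
  qed
  define f where "f k K = e (idx Q k K)" for k K
  have fm: "f k \<in> measurable ?M borel" for k
  proof -
    have em: "e \<in> measurable (count_space UNIV) borel" by simp
    have im: "(\<lambda>K. idx Q k K) \<in> measurable ?M (count_space UNIV)" by (rule idx_meas) (rule Qm)
    have "f k = (\<lambda>K. e (idx Q k K))" by (rule ext) (simp add: f_def)
    then show ?thesis using measurable_compose[OF im em] by simp
  qed
  have main: "(\<forall>k. f k K \<in> ?Z - K) \<and> inj (\<lambda>k. f k K) \<and>
      closure (range (\<lambda>k. f k K)) = range (\<lambda>k. f k K) \<union> frontier K \<and>
      (\<forall>l. f l K isolated_in closure (range (\<lambda>k. f k K)))" if KX: "K \<in> X" for K
  proof -
    note KP = Xprops[OF KX]
    have img: "e ` {i. Q i K} = cand K"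
    proof
      show "e ` {i. Q i K} \<subseteq> cand K" by (auto simp: Q_def)
      show "cand K \<subseteq> e ` {i. Q i K}"
      proof
        fix y assume y: "y \<in> cand K"
        then have "\<exists>i. e i = y" using candD re by blast
        define i where "i = (LEAST i. e i = y)"
        have ei: "e i = y" unfolding i_def using \<open>\<exists>i. e i = y\<close> by (rule LeastI_ex)
        have "\<forall>j<i. e j \<noteq> e i"
        proof (intro allI impI)
          fix j assume "j < i"
          then have "e j \<noteq> y" unfolding i_def by (rule not_less_Least)
          then show "e j \<noteq> e i" using ei by simp
        qed
        then have "Q i K" using ei y by (simp add: Q_def)
        then show "y \<in> e ` {i. Q i K}" using ei by blast
      qed
    qed
    have inf: "infinite {i. Q i K}"
    proof
      assume "finite {i. Q i K}"
      then have "finite (cand K)" using img finite_imageI by metis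
      then show False using cand_infinite[OF KP(1,3,4)] by simp
    qed
    note ip = idx_props[where Q=Q and x=K, OF inf]
    have rng: "range (\<lambda>k. f k K) = cand K"
    proof -
      have "range (\<lambda>k. idx Q k K) = {i. Q i K}" using ip(1) ip(3) by blast
      then have "range (\<lambda>k. f k K) = e ` {i. Q i K}" unfolding f_def by (metis image_image)
      then show ?thesis using img by simp
    qed
    have inj: "inj (\<lambda>k. f k K)"
    proof (rule injI)
      have nq: "f a K \<noteq> f b K" if ab: "a < b" for a b
      proof -
        have "idx Q a K < idx Q b K" using strict_monoD[OF ip(2) ab] by simp
        moreover have "Q (idx Q b K) K" by (rule ip(1))
        ultimately show ?thesis unfolding f_def Q_def by blast
      qed
      fix a b assume "f a K = f b K"
      then show "a = b" using nq[of a b] nq[of b a] by (metis linorder_neqE_nat)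
    qed
    show ?thesis
    proof (intro conjI allI)
      fix k
      have "f k K \<in> cand K" using rng by blast
      then show "f k K \<in> ?Z - K" using cand_out[OF KP(2,3)] by blast
    next
      show "inj (\<lambda>k. f k K)" by (rule inj)
    next
      show "closure (range (\<lambda>k. f k K)) = range (\<lambda>k. f k K) \<union> frontier K"
        unfolding rng by (rule cand_closure[OF KP(2,3,4)])
    next
      fix l
      have "f l K \<in> cand K" using rng by blast
      then show "f l K isolated_in closure (range (\<lambda>k. f k K))"
        unfolding rng by (rule cand_isolated[OF KP(2,3,4)])
    qed
  qed
  show ?thesis by (rule exI[of _ f]) (use fm main in blast)
qed

end
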